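(* Let $k$ be a field and $\mathsf{E}$ a left strictly locally finite $k$-linear category. Then the class of contrafinite left $\mathsf{E}$-modules is closed under extensions in the category of left $\mathsf{E}$-modules: if $0\to P\to T\to Q\to0$ is a short exact sequence of left $\mathsf{E}$-modules with $P$ and $Q$ contrafinite, then $T$ is contrafinite.
   Context: A small $k$-linear category $\mathsf{E}$ has $k$-vector spaces $\operatorname{Hom}_\mathsf{E}(x,y)$, $k$-bilinear associative composition and identities with $\mathrm{id}_x\ne0$. A left $\mathsf{E}$-module is a $k$-linear functor $P:\mathsf{E}\to k\text{-Vect}$ (action maps $\operatorname{Hom}_\mathsf{E}(x,y)\otimes_kP(x)\to P(y)$). Write $x\preceq y$ if there are $n\ge1$ and objects $x=z_0,\dots,z_n=y$ with $\operatorname{Hom}_\mathsf{E}(z_{i-1},z_i)\neq0$ for all $i$; $x\prec y$ means $x\preceq y$ and not $y\preceq x$. $\mathsf{E}$ is locally finite if all Hom spaces are finite-dimensional and every $\{z:x\preceq z\preceq y\}$ is finite; left strictly locally finite if moreover for every $y$ there is a finite set $X_y$ of objects with $x\prec y$ for $x\in X_y$ such that every $f:z\to y$ with $z\prec y$ equals $\sum_{i=1}^nh_ig_i$ ($n\ge0$) with $g_i:z\to x_i$, $h_i:x_i\to y$, $x_i\in X_y$. A left $\mathsf{E}$-module $P$ is contrafinite if for every object $y$ there is a finite set of objects $A$ such that the action map $\operatorname{Hom}_\mathsf{E}(x,y)\otimes_kP(x)\to P(y)$ vanishes for all $x\notin A$. *)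

theory Defs
  imports Complex_Main
begin

text \<open>
Encoding of a small k-linear category E (k a field, type 'k):
objects form the type 'o; all morphisms live in one ambient k-vector space
'm (with scalar multiplication sc); Hom(x,y) is the subspace H x y of 'm;
cmp x y z g f is the composite g o f of f : x -> y and g : y -> z;
ident x is the identity of x.  Every small k-linear category can be encoded
this way (take 'm to be the direct sum of all Hom spaces).
\<close>

definition klin_cat ::
  "('k::field \<Rightarrow> 'm::ab_group_add \<Rightarrow> 'm) \<Rightarrow> ('o \<Rightarrow> 'o \<Rightarrow> 'm set)
   \<Rightarrow> ('o \<Rightarrow> 'o \<Rightarrow> 'o \<Rightarrow> 'm \<Rightarrow> 'm \<Rightarrow> 'm) \<Rightarrow> ('o \<Rightarrow> 'm) \<Rightarrow> bool" where
  "klin_cat sc H cmp ident \<longleftrightarrow>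
     vector_space sc \<and>
     (\<forall>x y. module.subspace sc (H x y)) \<and>
     (\<forall>x y z f g. f \<in> H x y \<longrightarrow> g \<in> H y z \<longrightarrow> cmp x y z g f \<in> H x z) \<and>
     (\<forall>x y z g f1 f2. g \<in> H y z \<longrightarrow> f1 \<in> H x y \<longrightarrow> f2 \<in> H x y \<longrightarrow>
        cmp x y z g (f1 + f2) = cmp x y z g f1 + cmp x y z g f2) \<and>
     (\<forall>x y z g1 g2 f. g1 \<in> H y z \<longrightarrow> g2 \<in> H y z \<longrightarrow> f \<in> H x y \<longrightarrow>
        cmp x y z (g1 + g2) f = cmp x y z g1 f + cmp x y z g2 f) \<and>
     (\<forall>x y z g f c. g \<in> H y z \<longrightarrow> f \<in> H x y \<longrightarrow>
        cmp x y z g (sc c f) = sc c (cmp x y z g f) \<and>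
        cmp x y z (sc c g) f = sc c (cmp x y z g f)) \<and>
     (\<forall>w x y z f g h. f \<in> H w x \<longrightarrow> g \<in> H x y \<longrightarrow> h \<in> H y z \<longrightarrow>
        cmp w y z h (cmp w x y g f) = cmp w x z (cmp x y z h g) f) \<and>
     (\<forall>x. ident x \<in> H x x \<and> ident x \<noteq> 0) \<and>
     (\<forall>x y f. f \<in> H x y \<longrightarrow> cmp x y y (ident y) f = f \<and> cmp x x y f (ident x) = f)"

definition cat_le :: "('o \<Rightarrow> 'o \<Rightarrow> 'm::zero set) \<Rightarrow> 'o \<Rightarrow> 'o \<Rightarrow> bool" where
  "cat_le H = tranclp (\<lambda>x y. H x y \<noteq> {0})"

definition cat_less :: "('o \<Rightarrow> 'o \<Rightarrow> 'm::zero set) \<Rightarrow> 'o \<Rightarrow> 'o \<Rightarrow> bool" where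
  "cat_less H x y \<longleftrightarrow> cat_le H x y \<and> \<not> cat_le H y x"

definition locally_finite_cat ::
  "('k::field \<Rightarrow> 'm::ab_group_add \<Rightarrow> 'm) \<Rightarrow> ('o \<Rightarrow> 'o \<Rightarrow> 'm set) \<Rightarrow> bool" where
  "locally_finite_cat sc H \<longleftrightarrow>
     (\<forall>x y. \<exists>B. finite B \<and> B \<subseteq> H x y \<and> H x y \<subseteq> module.span sc B) \<and>
     (\<forall>x y. finite {z. cat_le H x z \<and> cat_le H z y})"

definition left_strictly_locally_finite ::
  "('k::field \<Rightarrow> 'm::ab_group_add \<Rightarrow> 'm) \<Rightarrow> ('o \<Rightarrow> 'o \<Rightarrow> 'm set)
   \<Rightarrow> ('o \<Rightarrow> 'o \<Rightarrow> 'o \<Rightarrow> 'm \<Rightarrow> 'm \<Rightarrow> 'm) \<Rightarrow> bool" where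
  "left_strictly_locally_finite sc H cmp \<longleftrightarrow>
     locally_finite_cat sc H \<and>
     (\<forall>y. \<exists>X. finite X \<and> (\<forall>x\<in>X. cat_less H x y) \<and>
        (\<forall>z f. cat_less H z y \<longrightarrow> f \<in> H z y \<longrightarrow>
           (\<exists>(n::nat) xs g h. (\<forall>i<n. xs i \<in> X \<and> g i \<in> H z (xs i) \<and> h i \<in> H (xs i) y) \<and>
              f = (\<Sum>i<n. cmp z (xs i) y (h i) (g i)))))"

definition left_module ::
  "('k::field \<Rightarrow> 'm::ab_group_add \<Rightarrow> 'm) \<Rightarrow> ('o \<Rightarrow> 'o \<Rightarrow> 'm set)
   \<Rightarrow> ('o \<Rightarrow> 'o \<Rightarrow> 'o \<Rightarrow> 'm \<Rightarrow> 'm \<Rightarrow> 'm) \<Rightarrow> ('o \<Rightarrow> 'm)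
   \<Rightarrow> ('k \<Rightarrow> 'v::ab_group_add \<Rightarrow> 'v) \<Rightarrow> ('o \<Rightarrow> 'v set) \<Rightarrow> ('o \<Rightarrow> 'o \<Rightarrow> 'm \<Rightarrow> 'v \<Rightarrow> 'v) \<Rightarrow> bool" where
  "left_module sc H cmp ident scP P act \<longleftrightarrow>
     vector_space scP \<and>
     (\<forall>x. module.subspace scP (P x)) \<and>
     (\<forall>x y f p. f \<in> H x y \<longrightarrow> p \<in> P x \<longrightarrow> act x y f p \<in> P y) \<and>
     (\<forall>x y f p1 p2. f \<in> H x y \<longrightarrow> p1 \<in> P x \<longrightarrow> p2 \<in> P x \<longrightarrow>
        act x y f (p1 + p2) = act x y f p1 + act x y f p2) \<and>
     (\<forall>x y f1 f2 p. f1 \<in> H x y \<longrightarrow> f2 \<in> H x y \<longrightarrow> p \<in> P x \<longrightarrow>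
        act x y (f1 + f2) p = act x y f1 p + act x y f2 p) \<and>
     (\<forall>x y f p c. f \<in> H x y \<longrightarrow> p \<in> P x \<longrightarrow>
        act x y f (scP c p) = scP c (act x y f p) \<and>
        act x y (sc c f) p = scP c (act x y f p)) \<and>
     (\<forall>x y z f g p. f \<in> H x y \<longrightarrow> g \<in> H y z \<longrightarrow> p \<in> P x \<longrightarrow>
        act x z (cmp x y z g f) p = act y z g (act x y f p)) \<and>
     (\<forall>x p. p \<in> P x \<longrightarrow> act x x (ident x) p = p)"

definition module_morphism ::
  "('o \<Rightarrow> 'o \<Rightarrow> 'm set)
   \<Rightarrow> ('k \<Rightarrow> 'v::ab_group_add \<Rightarrow> 'v) \<Rightarrow> ('o \<Rightarrow> 'v set) \<Rightarrow> ('o \<Rightarrow> 'o \<Rightarrow> 'm \<Rightarrow> 'v \<Rightarrow> 'v)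
   \<Rightarrow> ('k \<Rightarrow> 'w::ab_group_add \<Rightarrow> 'w) \<Rightarrow> ('o \<Rightarrow> 'w set) \<Rightarrow> ('o \<Rightarrow> 'o \<Rightarrow> 'm \<Rightarrow> 'w \<Rightarrow> 'w)
   \<Rightarrow> ('o \<Rightarrow> 'v \<Rightarrow> 'w) \<Rightarrow> bool" where
  "module_morphism H scP P actP scQ Q actQ \<phi> \<longleftrightarrow>
     (\<forall>x p. p \<in> P x \<longrightarrow> \<phi> x p \<in> Q x) \<and>
     (\<forall>x p1 p2. p1 \<in> P x \<longrightarrow> p2 \<in> P x \<longrightarrow> \<phi> x (p1 + p2) = \<phi> x p1 + \<phi> x p2) \<and>
     (\<forall>x p c. p \<in> P x \<longrightarrow> \<phi> x (scP c p) = scQ c (\<phi> x p)) \<and>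
     (\<forall>x y f p. f \<in> H x y \<longrightarrow> p \<in> P x \<longrightarrow> \<phi> y (actP x y f p) = actQ x y f (\<phi> x p))"

definition short_exact ::
  "('o \<Rightarrow> 'v::ab_group_add set) \<Rightarrow> ('o \<Rightarrow> 'w::ab_group_add set) \<Rightarrow> ('o \<Rightarrow> 'u::ab_group_add set)
   \<Rightarrow> ('o \<Rightarrow> 'v \<Rightarrow> 'w) \<Rightarrow> ('o \<Rightarrow> 'w \<Rightarrow> 'u) \<Rightarrow> bool" where
  "short_exact P T Q \<phi> \<psi> \<longleftrightarrow>
     (\<forall>x. inj_on (\<phi> x) (P x) \<and> \<phi> x ` P x = {t \<in> T x. \<psi> x t = 0} \<and> \<psi> x ` T x = Q x)"

definition contrafinite ::
  "('o \<Rightarrow> 'o \<Rightarrow> 'm set) \<Rightarrow> ('o \<Rightarrow> 'v::zero set) \<Rightarrow> ('o \<Rightarrow> 'o \<Rightarrow> 'm \<Rightarrow> 'v \<Rightarrow> 'v) \<Rightarrow> bool" where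
  "contrafinite H P act \<longleftrightarrow>
     (\<forall>y. \<exists>A. finite A \<and> (\<forall>x. x \<notin> A \<longrightarrow> (\<forall>f\<in>H x y. \<forall>p\<in>P x. act x y f p = 0)))"

end

theory Submission imports Defs begin

lemma vm: "vector_space s \<Longrightarrow> module s"
  by (simp add: vector_space_def module_def)
lemma sub0: "vector_space s \<Longrightarrow> module.subspace s S \<Longrightarrow> 0 \<in> S"
  by (rule module.subspace_0[OF vm])
lemma subadd: "vector_space s \<Longrightarrow> module.subspace s S \<Longrightarrow> a \<in> S \<Longrightarrow> b \<in> S \<Longrightarrow> a + b \<in> S"
  by (rule module.subspace_add[OF vm])

lemma lmD:
  assumes "left_module sc H cmp ident scP P act"
  shows "module.subspace scP (P x)" "vector_space scP"
   "f \<in> H x y \<Longrightarrow> p \<in> P x \<Longrightarrow> act x y f p \<in> P y"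
   "f \<in> H x y \<Longrightarrow> p1 \<in> P x \<Longrightarrow> p2 \<in> P x \<Longrightarrow> act x y f (p1 + p2) = act x y f p1 + act x y f p2"
   "f1 \<in> H x y \<Longrightarrow> f2 \<in> H x y \<Longrightarrow> p \<in> P x \<Longrightarrow> act x y (f1 + f2) p = act x y f1 p + act x y f2 p"
   "f \<in> H x y \<Longrightarrow> g \<in> H y z \<Longrightarrow> p \<in> P x \<Longrightarrow> act x z (cmp x y z g f) p = act y z g (act x y f p)"
   "p \<in> P x \<Longrightarrow> act x x (ident x) p = p"
  using assms unfolding left_module_def by auto

lemma kcD:
  assumes "klin_cat sc H cmp ident"
  shows "module.subspace sc (H x y)" "vector_space sc"
   "f \<in> H x y \<Longrightarrow> g \<in> H y z \<Longrightarrow> cmp x y z g f \<in> H x z"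
   "ident x \<in> H x x" "ident x \<noteq> 0"
  using assms unfolding klin_cat_def by auto

lemma lm_zero:
  assumes "left_module sc H cmp ident scP P act" "klin_cat sc H cmp ident"
  shows "f \<in> H x y \<Longrightarrow> act x y f 0 = 0"
    and "p \<in> P x \<Longrightarrow> act x y 0 p = 0"
proof -
  have h0: "0 \<in> H x y" "0 \<in> P x" using sub0[OF kcD(2)[OF assms(2)] kcD(1)[OF assms(2)]] sub0[OF lmD(2)[OF assms(1)] lmD(1)[OF assms(1)]] by auto
  show "f \<in> H x y \<Longrightarrow> act x y f 0 = 0"
  proof -
    assume f: "f \<in> H x y"
    have "act x y f (0 + 0) = act x y f 0 + act x y f 0"
      using lmD(4)[OF assms(1) f h0(2) h0(2)] .
    then show ?thesis by simp
  qed
  show "p \<in> P x \<Longrightarrow> act x y 0 p = 0"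
  proof -
    assume p: "p \<in> P x"
    have "act x y (0 + 0) p = act x y 0 p + act x y 0 p"
      using lmD(5)[OF assms(1) h0(1) h0(1) p] .
    then show ?thesis by simp
  qed
qed

lemma lm_sum_left:
  fixes n :: nat
  assumes "left_module sc H cmp ident scP P act" "klin_cat sc H cmp ident"
    and "\<forall>i<n. g i \<in> H x y" "p \<in> P x"
  shows "(\<Sum>i<n. g i) \<in> H x y \<and> act x y (\<Sum>i<n. g i) p = (\<Sum>i<n. act x y (g i) p)"
  using assms(3)
proof (induction n)
  case 0
  then show ?case using sub0[OF kcD(2)[OF assms(2)] kcD(1)[OF assms(2)]] lm_zero(2)[OF assms(1,2) assms(4)] by simp
next
  case (Suc n)
  from Suc have IH: "(\<Sum>i<n. g i) \<in> H x y \<and> act x y (\<Sum>i<n. g i) p = (\<Sum>i<n. act x y (g i) p)" by simp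
  have gn: "g n \<in> H x y" using Suc.prems by simp
  have "act x y ((\<Sum>i<n. g i) + g n) p = act x y (\<Sum>i<n. g i) p + act x y (g n) p"
    using lmD(5)[OF assms(1) _ gn assms(4)] IH by blast
  then show ?case using IH gn subadd[OF kcD(2)[OF assms(2)] kcD(1)[OF assms(2)]] by simp
qed

lemma lm_sum_right:
  fixes n :: nat
  assumes "left_module sc H cmp ident scP P act" "klin_cat sc H cmp ident"
    and "\<forall>i<n. a i \<in> P x" "f \<in> H x y"
  shows "(\<Sum>i<n. a i) \<in> P x \<and> act x y f (\<Sum>i<n. a i) = (\<Sum>i<n. act x y f (a i))"
  using assms(3)
proof (induction n)
  case 0
  then show ?case using sub0[OF lmD(2)[OF assms(1)] lmD(1)[OF assms(1)]] lm_zero(1)[OF assms(1,2) assms(4)] by simp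
next
  case (Suc n)
  from Suc have IH: "(\<Sum>i<n. a i) \<in> P x \<and> act x y f (\<Sum>i<n. a i) = (\<Sum>i<n. act x y f (a i))" by simp
  have an: "a n \<in> P x" using Suc.prems by simp
  have "act x y f ((\<Sum>i<n. a i) + a n) = act x y f (\<Sum>i<n. a i) + act x y f (a n)"
    using lmD(4)[OF assms(1) assms(4) _ an] IH by blast
  then show ?case using IH an subadd[OF lmD(2)[OF assms(1)] lmD(1)[OF assms(1)]] by simp
qed

lemma mm_zero:
  assumes "module_morphism H scP P actP scT T actT \<phi>" "left_module sc H cmp ident scP P actP"
  shows "\<phi> x 0 = 0"
proof -
  have "0 \<in> P x" using sub0[OF lmD(2)[OF assms(2)] lmD(1)[OF assms(2)]] by auto
  then have "\<phi> x (0 + 0) = \<phi> x 0 + \<phi> x 0" using assms(1) unfolding module_morphism_def by blast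
  then show ?thesis by simp
qed

theorem lemma4p8:
  fixes sc :: "'k::field \<Rightarrow> 'm::ab_group_add \<Rightarrow> 'm"
    and H :: "'o \<Rightarrow> 'o \<Rightarrow> 'm set"
    and cmp :: "'o \<Rightarrow> 'o \<Rightarrow> 'o \<Rightarrow> 'm \<Rightarrow> 'm \<Rightarrow> 'm"
    and ident :: "'o \<Rightarrow> 'm"
    and scP :: "'k \<Rightarrow> 'v::ab_group_add \<Rightarrow> 'v" and P :: "'o \<Rightarrow> 'v set"
    and actP :: "'o \<Rightarrow> 'o \<Rightarrow> 'm \<Rightarrow> 'v \<Rightarrow> 'v"
    and scT :: "'k \<Rightarrow> 'w::ab_group_add \<Rightarrow> 'w" and T :: "'o \<Rightarrow> 'w set"
    and actT :: "'o \<Rightarrow> 'o \<Rightarrow> 'm \<Rightarrow> 'w \<Rightarrow> 'w"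
    and scQ :: "'k \<Rightarrow> 'u::ab_group_add \<Rightarrow> 'u" and Q :: "'o \<Rightarrow> 'u set"
    and actQ :: "'o \<Rightarrow> 'o \<Rightarrow> 'm \<Rightarrow> 'u \<Rightarrow> 'u"
    and \<phi> :: "'o \<Rightarrow> 'v \<Rightarrow> 'w" and \<psi> :: "'o \<Rightarrow> 'w \<Rightarrow> 'u"
  assumes "klin_cat sc H cmp ident"
    and "left_strictly_locally_finite sc H cmp"
    and "left_module sc H cmp ident scP P actP"
    and "left_module sc H cmp ident scT T actT"
    and "left_module sc H cmp ident scQ Q actQ"
    and "module_morphism H scP P actP scT T actT \<phi>"
    and "module_morphism H scT T actT scQ Q actQ \<psi>"
    and "short_exact P T Q \<phi> \<psi>"
    and "contrafinite H P actP"
    and "contrafinite H Q actQ"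
  shows "contrafinite H T actT"
proof -
  note kc = assms(1) and mP = assms(3) and mT = assms(4) and mQ = assms(5)
  obtain AQ where AQ: "\<forall>y. finite (AQ y) \<and> (\<forall>x. x \<notin> AQ y \<longrightarrow> (\<forall>f\<in>H x y. \<forall>q\<in>Q x. actQ x y f q = 0))"
    using choice[OF assms(10)[unfolded contrafinite_def]] by blast
  obtain Xf where Xf: "\<forall>y. finite (Xf y) \<and> (\<forall>x\<in>Xf y. cat_less H x y) \<and>
        (\<forall>z f. cat_less H z y \<longrightarrow> f \<in> H z y \<longrightarrow>
           (\<exists>(n::nat) xs g h. (\<forall>i<n. xs i \<in> Xf y \<and> g i \<in> H z (xs i) \<and> h i \<in> H (xs i) y) \<and>
              f = (\<Sum>i<n. cmp z (xs i) y (h i) (g i))))"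
    using choice[OF conjunct2[OF assms(2)[unfolded left_strictly_locally_finite_def]]] by blast
  have clsfin: "\<And>x y. finite {z. cat_le H x z \<and> cat_le H z y}"
    using assms(2) unfolding left_strictly_locally_finite_def locally_finite_cat_def by blast
  have refl: "\<And>z. cat_le H z z"
  proof -
    fix z
    have "ident z \<in> H z z" "ident z \<noteq> 0" using kcD[OF kc] by auto
    then have "H z z \<noteq> {0}" by auto
    then show "cat_le H z z" unfolding cat_le_def by auto
  qed
  have trans: "\<And>a b c. cat_le H a b \<Longrightarrow> cat_le H b c \<Longrightarrow> cat_le H a c"
    unfolding cat_le_def by auto
  have phi: "module_morphism H scP P actP scT T actT \<phi>" by (rule assms(6))
  have psi: "module_morphism H scT T actT scQ Q actQ \<psi>" by (rule assms(7))
  have se: "\<And>x. \<phi> x ` P x = {t \<in> T x. \<psi> x t = 0}" using assms(8) unfolding short_exact_def by blast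
  show ?thesis unfolding contrafinite_def
  proof
    fix y
    obtain B where B: "finite B" "\<forall>x. x \<notin> B \<longrightarrow> (\<forall>f\<in>H x y. \<forall>p\<in>P x. actP x y f p = 0)"
      using assms(9) unfolding contrafinite_def by metis
    define V where "V z \<longleftrightarrow> (\<exists>A. finite A \<and> (\<forall>x g t h. x \<notin> A \<longrightarrow> g \<in> H x z \<longrightarrow> t \<in> T x \<longrightarrow>
       h \<in> H z y \<longrightarrow> actT z y h (actT x z g t) = 0))" for z
    have outB: "V z" if zB: "z \<notin> B" for z
      unfolding V_def
    proof (intro exI conjI allI impI)
      show "finite (AQ z)" using AQ by blast
      fix x g t h
      assume x: "x \<notin> AQ z" and g: "g \<in> H x z" and t: "t \<in> T x" and h: "h \<in> H z y"
      have sT: "actT x z g t \<in> T z" using lmD(3)[OF mT g t] .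
      have "\<psi> x t \<in> Q x" using psi t unfolding module_morphism_def by blast
      have e1: "\<psi> z (actT x z g t) = actQ x z g (\<psi> x t)"
        using psi g t unfolding module_morphism_def by blast
      have e2: "actQ x z g (\<psi> x t) = 0"
        using AQ x g \<open>\<psi> x t \<in> Q x\<close> by blast
      from e1 e2 have "\<psi> z (actT x z g t) = 0" by simp
      then have "actT x z g t \<in> \<phi> z ` P z" using se sT by auto
      then obtain p where p: "p \<in> P z" "actT x z g t = \<phi> z p" by blast
      have "actT z y h (\<phi> z p) = \<phi> y (actP z y h p)"
        using phi h p(1) unfolding module_morphism_def by metis
      also have "actP z y h p = 0" using B(2) zB h p(1) by blast
      finally show "actT z y h (actT x z g t) = 0" using p(2) mm_zero[OF phi mP] by simp
    qed
    have allV: "V z" for z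
    proof (induction z rule: measure_induct_rule[of "\<lambda>z. card {b\<in>B. cat_le H b z}"])
      case (less z)
      show ?case
      proof (cases "z \<in> B")
        case False
        then show ?thesis by (rule outB)
      next
        case True
        have VX: "\<forall>w\<in>Xf z. V w"
        proof
          fix w assume w: "w \<in> Xf z"
          then have wz: "cat_less H w z" using Xf by blast
          show "V w"
          proof (cases "w \<in> B")
            case False then show ?thesis by (rule outB)
          next
            case wB: True
            have sub: "{b\<in>B. cat_le H b w} \<subset> {b\<in>B. cat_le H b z}"
            proof -
              have "{b\<in>B. cat_le H b w} \<subseteq> {b\<in>B. cat_le H b z}"
                using wz trans unfolding cat_less_def by blast
              moreover have "z \<in> {b\<in>B. cat_le H b z}" using True refl by blast
              moreover have "z \<notin> {b\<in>B. cat_le H b w}" using wz unfolding cat_less_def by blast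
              ultimately show ?thesis by blast
            qed
            have "card {b\<in>B. cat_le H b w} < card {b\<in>B. cat_le H b z}"
              using psubset_card_mono[OF _ sub] B(1) by simp
            then show ?thesis by (rule less.IH)
          qed
        qed
        then obtain Aw where Aw: "\<forall>w\<in>Xf z. finite (Aw w) \<and> (\<forall>x g t h. x \<notin> Aw w \<longrightarrow> g \<in> H x w \<longrightarrow> t \<in> T x \<longrightarrow>
           h \<in> H w y \<longrightarrow> actT w y h (actT x w g t) = 0)"
          using bchoice[OF VX[unfolded V_def]] by blast
        show ?thesis unfolding V_def
        proof (intro exI conjI allI impI)
          show "finite ({u. cat_le H z u \<and> cat_le H u z} \<union> \<Union>(Aw ` Xf z))"
            using clsfin Aw Xf by auto
          fix x g t h
          assume x: "x \<notin> {u. cat_le H z u \<and> cat_le H u z} \<union> \<Union>(Aw ` Xf z)"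
            and g: "g \<in> H x z" and t: "t \<in> T x" and h: "h \<in> H z y"
          show "actT z y h (actT x z g t) = 0"
          proof (cases "g = 0")
            case True
            then show ?thesis using lm_zero[OF mT kc] t h by simp
          next
            case False
            then have "H x z \<noteq> {0}" using g by auto
            then have xz: "cat_le H x z" unfolding cat_le_def by auto
            then have "\<not> cat_le H z x" using x by blast
            then have "cat_less H x z" using xz unfolding cat_less_def by blast
            then obtain n xs gs hs where fac: "\<forall>i<(n::nat). xs i \<in> Xf z \<and> gs i \<in> H x (xs i) \<and> hs i \<in> H (xs i) z"
              and geq: "g = (\<Sum>i<n. cmp x (xs i) z (hs i) (gs i))"
              using Xf g by blast
            have cin: "\<forall>i<n. cmp x (xs i) z (hs i) (gs i) \<in> H x z" using fac kcD(3)[OF kc] by blast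
            have "actT x z g t = (\<Sum>i<n. actT x z (cmp x (xs i) z (hs i) (gs i)) t)"
              using lm_sum_left[OF mT kc cin t] geq by simp
            also have "\<dots> = (\<Sum>i<n. actT (xs i) z (hs i) (actT x (xs i) (gs i) t))"
              using fac lmD(6)[OF mT _ _ t] by simp
            finally have e1: "actT x z g t = (\<Sum>i<n. actT (xs i) z (hs i) (actT x (xs i) (gs i) t))" .
            have inT: "\<forall>i<n. actT (xs i) z (hs i) (actT x (xs i) (gs i) t) \<in> T z"
              using fac lmD(3)[OF mT] t by blast
            have "actT z y h (actT x z g t) = (\<Sum>i<n. actT z y h (actT (xs i) z (hs i) (actT x (xs i) (gs i) t)))"
              using lm_sum_right[OF mT kc inT h] e1 by simp
            also have "\<dots> = (\<Sum>i<n. actT (xs i) y (cmp (xs i) z y h (hs i)) (actT x (xs i) (gs i) t))"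
              using fac lmD(6)[OF mT _ h] lmD(3)[OF mT] t by (simp)
            also have "\<dots> = (\<Sum>i<n. 0)"
            proof (rule sum.cong)
              fix i assume "i \<in> {..<n}"
              then have i: "xs i \<in> Xf z" "gs i \<in> H x (xs i)" "hs i \<in> H (xs i) z" using fac by auto
              have "x \<notin> Aw (xs i)" using x i(1) by blast
              moreover have "cmp (xs i) z y h (hs i) \<in> H (xs i) y" using kcD(3)[OF kc i(3) h] .
              ultimately show "actT (xs i) y (cmp (xs i) z y h (hs i)) (actT x (xs i) (gs i) t) = 0"
                using Aw i t by blast
            qed simp
            finally show ?thesis by simp
          qed
        qed
      qed
    qed
    obtain A where A: "finite A" "\<forall>x g t h. x \<notin> A \<longrightarrow> g \<in> H x y \<longrightarrow> t \<in> T x \<longrightarrow>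
       h \<in> H y y \<longrightarrow> actT y y h (actT x y g t) = 0"
      using allV[of y] unfolding V_def by blast
    show "\<exists>A. finite A \<and> (\<forall>x. x \<notin> A \<longrightarrow> (\<forall>f\<in>H x y. \<forall>p\<in>T x. actT x y f p = 0))"
    proof (intro exI conjI allI impI ballI)
      show "finite A" by (rule A(1))
      fix x f p assume x: "x \<notin> A" and f: "f \<in> H x y" and p: "p \<in> T x"
      have "actT x y f p = actT y y (ident y) (actT x y f p)"
        using lmD(7)[OF mT lmD(3)[OF mT f p]] by simp
      also have "\<dots> = 0" using A(2) x f p kcD(4)[OF kc] by blast
      finally show "actT x y f p = 0" .
    qed
  qed
qed

end
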